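(* For the system $\dot n^x=P(n^x,n^y)$, $\dot n^y=Q(n^x,n^y)$, the set of stationary points in the open quadrant $(0,\infty)^2$ is either infinite (a curve of fixed points) or finite, and in the finite case it has: at most $3$ points if $\beta\ne0$ and $\mu\ne0$; at most $2$ points if $\beta=0,\mu=1$; at most $1$ point if $\beta=1,\mu=0$.
   Context: Let $r(x),r(y)>0$, $C(u,v)>0$ for $u,v\in\{x,y\}$, $\alpha(x,y)\in\mathbb R$, and $\beta,\mu\ge0$ with $\beta+\mu>0$. Define $$P(u,v)=\Big(r(x)-C(x,x)u-C(x,y)v+\frac{\alpha(x,y)}{\beta+\mu(u+v)}v\Big)u,\qquad Q(u,v)=\Big(r(y)-C(y,x)u-C(y,y)v-\frac{\alpha(x,y)}{\beta+\mu(u+v)}u\Big)v.$$ *)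

theory Defs
  imports Complex_Main
begin

text \<open>Two-species vector field. Parameters: rx = r(x), ry = r(y),
  cxx = C(x,x), cxy = C(x,y), cyx = C(y,x), cyy = C(y,y), a = alpha(x,y).\<close>


definition P_field :: "real \<Rightarrow> real \<Rightarrow> real \<Rightarrow> real \<Rightarrow> real \<Rightarrow> real \<Rightarrow> real \<Rightarrow> real \<Rightarrow> real" where
  "P_field rx cxx cxy a \<beta> \<mu> u v =
     (rx - cxx * u - cxy * v + a / (\<beta> + \<mu> * (u + v)) * v) * u"

definition Q_field :: "real \<Rightarrow> real \<Rightarrow> real \<Rightarrow> real \<Rightarrow> real \<Rightarrow> real \<Rightarrow> real \<Rightarrow> real \<Rightarrow> real" where
  "Q_field ry cyx cyy a \<beta> \<mu> u v =
     (ry - cyx * u - cyy * v - a / (\<beta> + \<mu> * (u + v)) * u) * v"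

definition stat_points ::
  "real \<Rightarrow> real \<Rightarrow> real \<Rightarrow> real \<Rightarrow> real \<Rightarrow> real \<Rightarrow> real \<Rightarrow> real \<Rightarrow> real \<Rightarrow> (real \<times> real) set" where
  "stat_points rx ry cxx cxy cyx cyy a \<beta> \<mu> =
     {(u, v). u > 0 \<and> v > 0 \<and>
        P_field rx cxx cxy a \<beta> \<mu> u v = 0 \<and> Q_field ry cyx cyy a \<beta> \<mu> u v = 0}"

end

theory Submission
  imports Defs "HOL-Computational_Algebra.Polynomial"
begin

lemma deg1: "degree [:a, b::real:] \<le> 1"
  using degree_pCons_le[of a "[:b:]"] by simp

lemma P_iff:
  assumes "u > 0" "D = \<beta> + \<mu> * (u + v)" "D > 0"
  shows "P_field rx cxx cxy a \<beta> \<mu> u v = 0 \<longleftrightarrow> (rx - cxx*u - cxy*v)*D + a*v = 0"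
proof -
  have "P_field rx cxx cxy a \<beta> \<mu> u v = 0 \<longleftrightarrow> rx - cxx*u - cxy*v + a/D*v = 0"
    using assms by (simp add: P_field_def)
  also have "\<dots> \<longleftrightarrow> (rx - cxx*u - cxy*v)*D + a*v = 0"
    using assms(3) by (simp add: field_simps)
  finally show ?thesis .
qed

lemma Q_iff:
  assumes "v > 0" "D = \<beta> + \<mu> * (u + v)" "D > 0"
  shows "Q_field ry cyx cyy a \<beta> \<mu> u v = 0 \<longleftrightarrow> (ry - cyx*u - cyy*v)*D - a*u = 0"
proof -
  have "Q_field ry cyx cyy a \<beta> \<mu> u v = 0 \<longleftrightarrow> ry - cyx*u - cyy*v - a/D*u = 0"
    using assms by (simp add: Q_field_def)
  also have "\<dots> \<longleftrightarrow> (ry - cyx*u - cyy*v)*D - a*u = 0"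
    using assms(3) by (simp add: field_simps)
  finally show ?thesis .
qed

theorem mainTheorem7:
  fixes rx ry cxx cxy cyx cyy a \<beta> \<mu> :: real
  assumes "rx > 0" "ry > 0"
    and "cxx > 0" "cxy > 0" "cyx > 0" "cyy > 0"
    and "\<beta> \<ge> 0" "\<mu> \<ge> 0" "\<beta> + \<mu> > 0"
  defines "S \<equiv> stat_points rx ry cxx cxy cyx cyy a \<beta> \<mu>"
  shows "infinite S \<or>
         (finite S \<and>
          (\<beta> \<noteq> 0 \<and> \<mu> \<noteq> 0 \<longrightarrow> card S \<le> 3) \<and>
          (\<beta> = 0 \<and> \<mu> = 1 \<longrightarrow> card S \<le> 2) \<and>
          (\<beta> = 1 \<and> \<mu> = 0 \<longrightarrow> card S \<le> 1))"
proof -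
  define L1 where "L1 = (\<lambda>p::real. cxx*p + cxy*(1-p))"
  define L2 where "L2 = (\<lambda>p::real. cyx*p + cyy*(1-p))"
  define A where "A = (\<lambda>p. rx * L2 p - ry * L1 p)"
  define M where "M = (\<lambda>p. L2 p * (1-p) + L1 p * p)"
  define R where "R = (\<lambda>p::real. rx*p + ry*(1-p))"
  define K where "K = (\<lambda>p. (\<mu> * A p + a * M p) * R p + \<beta> * A p * M p)"
  define sf where "sf = (\<lambda>p. R p / M p)"
  define \<psi> where "\<psi> = (\<lambda>p. (p * sf p, (1-p) * sf p))"
  define Z where "Z = {p. 0 < p \<and> p < 1 \<and> K p = 0}"
  have L1pos: "L1 p > 0" if "0 < p" "p < 1" for p
    unfolding L1_def using that assms by (smt (verit) mult_pos_pos)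
  have L2pos: "L2 p > 0" if "0 < p" "p < 1" for p
    unfolding L2_def using that assms by (smt (verit) mult_pos_pos)
  have Mpos: "M p > 0" if "0 < p" "p < 1" for p
    unfolding M_def using that L1pos[OF that] L2pos[OF that] by (smt (verit) mult_pos_pos)
  have Rpos: "R p > 0" if "0 < p" "p < 1" for p
    unfolding R_def using that assms by (smt (verit) mult_pos_pos)
  have Dpos: "\<beta> + \<mu> * s > 0" if "s > 0" for s
    using assms(7-9) that by (smt (verit) mult_pos_pos mult_nonneg_nonneg)
  have Kid: "K p = M p * (A p * (\<beta> + \<mu>*s) + a*s*M p)" if "R p = s * M p" for p s
    unfolding K_def using that by (simp add: algebra_simps)
  have comb1: "(R p - s*M p)*D = p*((rx - s*L1 p)*D + a*(1-p)*s) + (1-p)*((ry - s*L2 p)*D - a*p*s)"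
    for p s D unfolding R_def M_def L1_def L2_def by (simp add: algebra_simps)
  have comb2: "A p * D + a*s*M p = L2 p*((rx - s*L1 p)*D + a*(1-p)*s) - L1 p*((ry - s*L2 p)*D - a*p*s)"
    for p s D unfolding A_def M_def by (simp add: algebra_simps)
  have key: "S = \<psi> ` Z"
  proof
    show "S \<subseteq> \<psi> ` Z"
    proof
      fix w assume "w \<in> S"
      then obtain u v where w: "w = (u,v)" and u: "u > 0" and v: "v > 0"
        and P: "P_field rx cxx cxy a \<beta> \<mu> u v = 0" and Q: "Q_field ry cyx cyy a \<beta> \<mu> u v = 0"
        unfolding S_def stat_points_def by auto
      define s where "s = u + v"
      define D where "D = \<beta> + \<mu> * s"
      define p where "p = u / s"
      have s: "s > 0" using u v s_def by simp
      have D: "D > 0" using Dpos[OF s] D_def by simp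
      have up: "u = p * s" and vp: "v = (1-p)*s" using s unfolding p_def s_def by (auto simp: field_simps)
      have p01: "0 < p" "p < 1" using u v s unfolding p_def s_def by (auto simp: field_simps)
      have E1: "(rx - cxx*u - cxy*v)*D + a*v = 0"
        using P P_iff[OF u, of D \<beta> \<mu> v] D D_def s_def by simp
      have E2: "(ry - cyx*u - cyy*v)*D - a*u = 0"
        using Q Q_iff[OF v, of D \<beta> \<mu> u] D D_def s_def by simp
      have E1': "(rx - s*L1 p)*D + a*(1-p)*s = 0"
        using E1 unfolding up vp L1_def by (simp add: algebra_simps)
      have E2': "(ry - s*L2 p)*D - a*p*s = 0"
        using E2 unfolding up vp L2_def by (simp add: algebra_simps)
      have "(R p - s*M p)*D = 0" using comb1[of p s D] E1' E2' by simp
      hence RM: "R p = s * M p" using D by simp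
      have AD: "A p * D + a*s*M p = 0" using comb2[of p D s] E1' E2' by simp
      have "K p = 0" using Kid[OF RM] AD D_def by simp
      hence "p \<in> Z" using p01 Z_def by simp
      moreover have "sf p = s" using RM Mpos[OF p01] unfolding sf_def by simp
      hence "\<psi> p = w" unfolding \<psi>_def w using up vp by simp
      ultimately show "w \<in> \<psi> ` Z" by blast
    qed
  next
    show "\<psi> ` Z \<subseteq> S"
    proof
      fix w assume "w \<in> \<psi> ` Z"
      then obtain p where pZ: "p \<in> Z" and w: "w = \<psi> p" by blast
      have p01: "0 < p" "p < 1" and K0: "K p = 0" using pZ Z_def by auto
      define s where "s = sf p"
      define D where "D = \<beta> + \<mu> * s"
      define u where "u = p * s"
      define v where "v = (1-p) * s"
      have s: "s > 0" unfolding s_def sf_def using Rpos[OF p01] Mpos[OF p01] by simp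
      have D: "D > 0" using Dpos[OF s] D_def by simp
      have RM: "R p = s * M p" unfolding s_def sf_def using Mpos[OF p01] by simp
      have AD: "A p * D + a*s*M p = 0" using Kid[OF RM] K0 Mpos[OF p01] D_def by simp
      have c1: "p*((rx - s*L1 p)*D + a*(1-p)*s) + (1-p)*((ry - s*L2 p)*D - a*p*s) = 0"
        using comb1[of p s D] RM by simp
      have c2: "L2 p*((rx - s*L1 p)*D + a*(1-p)*s) - L1 p*((ry - s*L2 p)*D - a*p*s) = 0"
        using comb2[of p D s] AD by simp
      define e1 where "e1 = (rx - s*L1 p)*D + a*(1-p)*s"
      define e2 where "e2 = (ry - s*L2 p)*D - a*p*s"
      have "M p * e1 = L1 p * (p*e1 + (1-p)*e2) + (1-p)*(L2 p*e1 - L1 p*e2)"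
        unfolding M_def by (simp add: algebra_simps)
      hence "M p * e1 = 0" using c1 c2 e1_def e2_def by simp
      hence E1': "e1 = 0" using Mpos[OF p01] by simp
      have "M p * e2 = L2 p * (p*e1 + (1-p)*e2) - p*(L2 p*e1 - L1 p*e2)"
        unfolding M_def by (simp add: algebra_simps)
      hence "M p * e2 = 0" using c1 c2 e1_def e2_def by simp
      hence E2': "e2 = 0" using Mpos[OF p01] by simp
      have u: "u > 0" and v: "v > 0" using s p01 u_def v_def by auto
      have suv: "s = u + v" unfolding u_def v_def by (simp add: algebra_simps)
      have E1: "(rx - cxx*u - cxy*v)*D + a*v = 0"
        using E1' unfolding e1_def u_def v_def L1_def by (simp add: algebra_simps)
      have E2: "(ry - cyx*u - cyy*v)*D - a*u = 0"
        using E2' unfolding e2_def u_def v_def L2_def by (simp add: algebra_simps)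
      have "P_field rx cxx cxy a \<beta> \<mu> u v = 0"
        using P_iff[OF u, of D \<beta> \<mu> v] E1 D D_def suv by simp
      moreover have "Q_field ry cyx cyy a \<beta> \<mu> u v = 0"
        using Q_iff[OF v, of D \<beta> \<mu> u] E2 D D_def suv by simp
      moreover have "w = (u, v)" unfolding w \<psi>_def u_def v_def s_def by simp
      ultimately show "w \<in> S" unfolding S_def stat_points_def using u v by simp
    qed
  qed
  have inj: "inj_on \<psi> {0<..<1}"
  proof (rule inj_onI)
    fix p q assume p: "p \<in> {0<..<(1::real)}" and q: "q \<in> {0<..<(1::real)}" and e: "\<psi> p = \<psi> q"
    have e1: "p * sf p = q * sf q" and e2: "(1-p) * sf p = (1-q)*sf q" using e \<psi>_def by auto
    have "sf p = sf q" using e1 e2 by (simp add: algebra_simps)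
    moreover have "sf p > 0" using p Rpos Mpos sf_def by simp
    ultimately show "p = q" using e1 by simp
  qed
  define L1q where "L1q = [:cxy, cxx - cxy:]"
  define L2q where "L2q = [:cyy, cyx - cyy:]"
  define Aq where "Aq = smult rx L2q - smult ry L1q"
  define Mq where "Mq = L2q * [:1, -1:] + L1q * [:0, 1:]"
  define Rq where "Rq = [:ry, rx - ry:]"
  define Kq where "Kq = (smult \<mu> Aq + smult a Mq) * Rq + smult \<beta> (Aq * Mq)"
  have pL1: "poly L1q p = L1 p" for p unfolding L1q_def L1_def by (simp add: algebra_simps)
  have pL2: "poly L2q p = L2 p" for p unfolding L2q_def L2_def by (simp add: algebra_simps)
  have pA: "poly Aq p = A p" for p unfolding Aq_def A_def by (simp add: pL1 pL2)
  have pM: "poly Mq p = M p" for p unfolding Mq_def M_def by (simp add: pL1 pL2 algebra_simps)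
  have pR: "poly Rq p = R p" for p unfolding Rq_def R_def by (simp add: algebra_simps)
  have pK: "poly Kq p = K p" for p unfolding Kq_def K_def by (simp add: pA pM pR algebra_simps)
  have dL1: "degree L1q \<le> 1" unfolding L1q_def by (rule deg1)
  have dL2: "degree L2q \<le> 1" unfolding L2q_def by (rule deg1)
  have dR: "degree Rq \<le> 1" unfolding Rq_def by (rule deg1)
  have dA: "degree Aq \<le> 1" unfolding Aq_def
    by (intro degree_diff_le order.trans[OF degree_smult_le] dL1 dL2)
  have dM: "degree Mq \<le> 2"
  proof -
    have "degree (L2q * [:1, -1:]) \<le> 2"
      using degree_mult_le[of L2q "[:1,-1:]"] dL2 deg1[of 1 "-1"] by simp
    moreover have "degree (L1q * [:0, 1:]) \<le> 2"
      using degree_mult_le[of L1q "[:0,1:]"] dL1 deg1[of 0 1] by simp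
    ultimately show ?thesis unfolding Mq_def by (rule degree_add_le)
  qed
  have dB: "degree (smult \<mu> Aq + smult a Mq) \<le> 2"
    using dA dM by (intro degree_add_le order.trans[OF degree_smult_le]) auto
  have dK: "degree Kq \<le> 3"
  proof -
    have "degree ((smult \<mu> Aq + smult a Mq) * Rq) \<le> 3"
      using degree_mult_le[of "smult \<mu> Aq + smult a Mq" Rq] dB dR by simp
    moreover have "degree (smult \<beta> (Aq * Mq)) \<le> 3"
      using degree_smult_le[of \<beta> "Aq*Mq"] degree_mult_le[of Aq Mq] dA dM by simp
    ultimately show ?thesis unfolding Kq_def by (rule degree_add_le)
  qed
  show ?thesis
  proof (cases "Kq = 0")
    case True
    hence "Z = {0<..<1}" unfolding Z_def using pK by auto
    moreover have "infinite {0<..<(1::real)}" by (rule infinite_Ioo) simp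
    ultimately have "infinite S" using key inj finite_imageD[of \<psi> "{0<..<1::real}"] by metis
    thus ?thesis by simp
  next
    case False
    have ZK: "Z \<subseteq> {x. poly Kq x = 0}" unfolding Z_def using pK by auto
    have finZ: "finite Z" using poly_roots_finite[OF False] ZK finite_subset by blast
    have cS: "card S \<le> card Z" using key card_image_le[OF finZ] by simp
    have bound: "card Z \<le> n" if "q \<noteq> 0" "degree q \<le> n" "Z \<subseteq> {x. poly q x = 0}" for q n
      using card_mono[OF poly_roots_finite[OF that(1)] that(3)] card_poly_roots_bound[OF that(1)] that(2)
      by linarith
    have c1: "card S \<le> 3" using bound[OF False dK ZK] cS by simp
    have c2: "card S \<le> 2" if "\<beta> = 0" "\<mu> = 1"
    proof -
      define Bq where "Bq = Aq + smult a Mq"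
      have "Kq = Bq * Rq" unfolding Kq_def Bq_def using that by simp
      hence Bq0: "Bq \<noteq> 0" using False by auto
      have "degree Bq \<le> 2" using dB that Bq_def by simp
      moreover have "Z \<subseteq> {x. poly Bq x = 0}"
      proof
        fix p assume "p \<in> Z"
        hence p01: "0<p" "p<1" and "K p = 0" using Z_def by auto
        hence "poly Bq p * R p = 0" using pK \<open>Kq = Bq * Rq\<close> pR by simp
        thus "p \<in> {x. poly Bq x = 0}" using Rpos[OF p01] by simp
      qed
      ultimately show ?thesis using bound[OF Bq0] cS by fastforce
    qed
    have c3: "card S \<le> 1" if "\<beta> = 1" "\<mu> = 0"
    proof -
      define Cq where "Cq = smult a Rq + Aq"
      have "Kq = Mq * Cq" unfolding Kq_def Cq_def using that by (simp add: algebra_simps)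
      hence Cq0: "Cq \<noteq> 0" using False by auto
      have "degree Cq \<le> 1" unfolding Cq_def
        using dR dA by (intro degree_add_le order.trans[OF degree_smult_le]) auto
      moreover have "Z \<subseteq> {x. poly Cq x = 0}"
      proof
        fix p assume "p \<in> Z"
        hence p01: "0<p" "p<1" and "K p = 0" using Z_def by auto
        hence "M p * poly Cq p = 0" using pK \<open>Kq = Mq * Cq\<close> pM by simp
        thus "p \<in> {x. poly Cq x = 0}" using Mpos[OF p01] by simp
      qed
      ultimately show ?thesis using bound[OF Cq0] cS by fastforce
    qed
    have "finite S" using key finZ by simp
    thus ?thesis using c1 c2 c3 by blast
  qed
qed

end
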